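(* Let $n\ge3$, $\alpha\in(0,n)$, $p,q>0$ with $pq>1$, and let $u,v$ be positive bounded solutions on $\mathbb{R}^n$ of $$u(x)=\int_{\mathbb{R}^n}\frac{v^q(y)\,dy}{|x-y|^{n-\alpha}},\qquad v(x)=\int_{\mathbb{R}^n}\frac{u^p(y)\,dy}{|x-y|^{n-\alpha}}.$$ (1) Let $\theta_1<\frac{\alpha(q+1)}{pq-1}$ and $\theta_2<\frac{\alpha(p+1)}{pq-1}$. Then there is no $C>0$ such that $u(x)\ge C(1+|x|)^{-\theta_1}$ for all sufficiently large $|x|$, and there is no $C>0$ such that $v(x)\ge C(1+|x|)^{-\theta_2}$ for all sufficiently large $|x|$. (2) Suppose moreover $(u,v)\notin L^{r_0}(\mathbb{R}^n)\times L^{s_0}(\mathbb{R}^n)$, where $r_0=\frac{n(pq-1)}{\alpha(q+1)}$, $s_0=\frac{n(pq-1)}{\alpha(p+1)}$. Let $\theta_3>\frac{\alpha(q+1)}{pq-1}$ and $\theta_4>\frac{\alpha(p+1)}{pq-1}$. Then there is no $C>0$ such that $u(x)\le C(1+|x|)^{-\theta_3}$ for all sufficiently large $|x|$, and there is no $C>0$ such that $v(x)\le C(1+|x|)^{-\theta_4}$ for all sufficiently large $|x|$.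
   Context: Positive solutions are positive measurable functions satisfying both integral identities (finite) at every point. *)

theory Defs
  imports "HOL-Analysis.Analysis"
begin

definition riesz_pot :: "real \<Rightarrow> (real^'n \<Rightarrow> real) \<Rightarrow> real^'n \<Rightarrow> ennreal" where
  "riesz_pot \<alpha> f x = (\<integral>\<^sup>+ y. ennreal (f y / norm (x - y) powr (real CARD('n) - \<alpha>)) \<partial>lborel)"

definition pos_bdd_solution ::
  "real \<Rightarrow> real \<Rightarrow> real \<Rightarrow> (real^'n \<Rightarrow> real) \<Rightarrow> (real^'n \<Rightarrow> real) \<Rightarrow> bool" where
  "pos_bdd_solution \<alpha> p q u v \<longleftrightarrow>
     u \<in> borel_measurable lborel \<and> v \<in> borel_measurable lborel \<and>
     (\<forall>x. u x > 0) \<and> (\<forall>x. v x > 0) \<and>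
     bounded (range u) \<and> bounded (range v) \<and>
     (\<forall>x. riesz_pot \<alpha> (\<lambda>y. v y powr q) x = ennreal (u x)) \<and>
     (\<forall>x. riesz_pot \<alpha> (\<lambda>y. u y powr p) x = ennreal (v x))"

definition in_Lp :: "real \<Rightarrow> (real^'n \<Rightarrow> real) \<Rightarrow> bool" where
  "in_Lp r f \<longleftrightarrow> f \<in> borel_measurable lborel \<and>
     (\<integral>\<^sup>+ x. ennreal (\<bar>f x\<bar> powr r) \<partial>lborel) < \<infinity>"

end

theory Submission
  imports Defs
begin


definition omg :: "'n::finite itself \<Rightarrow> real" where
  "omg _ = unit_ball_vol (real CARD('n))"

lemma omg_pos: "omg TYPE('n::finite) > 0"
  by (simp add: omg_def)

lemma emeasure_ball_vec:
  fixes c :: "real^'n" assumes "r \<ge> 0"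
  shows "emeasure lborel (ball c r) = ennreal (omg TYPE('n) * r ^ CARD('n))"
  using emeasure_ball[OF assms, of c] by (simp add: omg_def DIM_cart)

lemma nn_int_le_sum_balls:
  fixes f :: "real^'n \<Rightarrow> ennreal"
  assumes le: "\<And>z. f z \<le> (\<Sum>k. ennreal (a k) * indicator (ball 0 (\<rho> k)) z)"
    and a: "\<And>k. a k \<ge> 0" and \<rho>: "\<And>k. \<rho> k \<ge> 0"
  shows "(\<integral>\<^sup>+z. f z \<partial>lborel) \<le> (\<Sum>k. ennreal (a k * (omg TYPE('n) * \<rho> k ^ CARD('n))))"
proof -
  have "(\<integral>\<^sup>+z. f z \<partial>lborel) \<le> (\<integral>\<^sup>+z. (\<Sum>k. ennreal (a k) * indicator (ball (0::real^'n) (\<rho> k)) z) \<partial>lborel)"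
    by (intro nn_integral_mono le)
  also have "\<dots> = (\<Sum>k. \<integral>\<^sup>+z. ennreal (a k) * indicator (ball (0::real^'n) (\<rho> k)) z \<partial>lborel)"
    by (intro nn_integral_suminf borel_measurable_times_ennreal borel_measurable_const borel_measurable_indicator) auto
  also have "\<dots> = (\<Sum>k. ennreal (a k * (omg TYPE('n) * \<rho> k ^ CARD('n))))"
    using a \<rho> omg_pos by (simp add: nn_integral_cmult_indicator emeasure_ball_vec ennreal_mult')
  finally show ?thesis .
qed

lemma ennreal_le_suminf: "(f::nat \<Rightarrow> ennreal) k \<le> suminf f"
  using sum_le_suminf[of f "{k}"] by (simp add: summableI)



lemma term_eq1:
  fixes r g :: real assumes "r > 0" 
  shows "((r * (1/2)^(Suc k)) powr (-g)) * (w * (r * (1/2)^k) ^ N) = w * 2 powr g * r powr (real N - g) * (2 powr (g - real N))^k"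
proof -
  have h: "(1/2::real)^m = 2 powr (- real m)" for m by (simp add: powr_minus_divide powr_realpow power_one_over)
  have e1: "(r * (1/2)^k) ^ N = r powr (real N) * 2 powr (- real k * real N)"
    using assms by (simp add: h power_mult_distrib powr_realpow[symmetric] powr_powr)
  have e2: "(r * (1/2)^(Suc k)) powr (-g) = r powr (-g) * 2 powr ((real k + 1) * g)"
  proof -
    have "r * (1/2)^(Suc k) = r * 2 powr (-(real k + 1))" by (simp only: h) (simp add: algebra_simps)
    then show ?thesis using assms by (simp add: powr_mult powr_powr algebra_simps del: power_Suc)
  qed
  have e3: "(2 powr (g - real N))^k = 2 powr (g * real k) * 2 powr (- real k * real N)"
    by (simp add: powr_realpow[symmetric] powr_powr powr_add[symmetric] algebra_simps)
  have e4: "r powr (real N - g) = r powr real N * r powr (-g)"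
    by (simp add: powr_add[symmetric])
  have e5: "(2::real) powr ((real k + 1) * g) = 2 powr g * 2 powr (g * real k)"
    by (simp add: powr_add[symmetric] algebra_simps)
  show ?thesis unfolding e1 e2 e3 e4 e5 by (simp add: algebra_simps)
qed

lemma geom_ennreal:
  fixes C q :: real assumes "0 \<le> C" "0 \<le> q" "q < 1"
  shows "(\<Sum>k. ennreal (C * q^k)) = ennreal (C / (1 - q))"
proof -
  have "(\<lambda>k. C * q^k) sums (C * (1 / (1 - q)))"
    using assms by (intro sums_mult geometric_sums) auto
  then show ?thesis using assms by (subst suminf_ennreal_eq) auto
qed

lemma int_ball_pow:
  fixes r g :: real
  assumes r: "r > 0" and g: "0 \<le> g" "g < real CARD('n)"
  shows "(\<integral>\<^sup>+z. indicator (ball (0::real^'n) r) z * ennreal (norm z powr (-g)) \<partial>lborel)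
     \<le> ennreal (omg TYPE('n) * 2 powr g / (1 - 2 powr (g - real CARD('n))) * r powr (real CARD('n) - g))"
proof -
  define a where "a k = (r * (1/2)^(Suc k)) powr (-g)" for k
  define \<rho> where "\<rho> k = r * (1/2::real)^k" for k
  have pt: "indicator (ball (0::real^'n) r) z * ennreal (norm z powr (-g))
      \<le> (\<Sum>k. ennreal (a k) * indicator (ball 0 (\<rho> k)) z)" for z
  proof (cases "z \<in> ball 0 r \<and> z \<noteq> 0")
    case True
    then have z: "0 < norm z" "norm z < r" by auto
    obtain m where "(1/2::real)^m < norm z / r" using real_arch_pow_inv[of "norm z / r" "1/2"] z r by auto
    then have "r * (1/2)^(Suc m) \<le> norm z" using r by (simp add: field_simps)
    then have "\<exists>k. r * (1/2)^(Suc k) \<le> norm z" by blast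
    then obtain k where k1: "r * (1/2)^(Suc k) \<le> norm z" and k2: "\<forall>m<k. \<not> r * (1/2)^(Suc m) \<le> norm z"
      using exists_least_iff[of "\<lambda>k. r * (1/2)^(Suc k) \<le> norm z"] by blast
    have k3: "norm z < \<rho> k"
    proof (cases k)
      case 0 then show ?thesis using z by (simp add: \<rho>_def)
    next
      case (Suc m) then show ?thesis using k2 by (auto simp: \<rho>_def)
    qed
    have "norm z powr (-g) \<le> a k"
      unfolding a_def
    proof (rule powr_mono2')
      show "-g \<le> 0" using g by simp
      have "0 < r" by fact
      then show "0 < r * (1/2)^(Suc k)" by simp
      show "r * (1/2)^(Suc k) \<le> norm z" by (rule k1)
    qed
    then have "indicator (ball (0::real^'n) r) z * ennreal (norm z powr (-g)) \<le> ennreal (a k) * indicator (ball 0 (\<rho> k)) z"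
      using True k3 by (auto intro: ennreal_leI)
    also have "\<dots> \<le> (\<Sum>k. ennreal (a k) * indicator (ball 0 (\<rho> k)) z)"
      by (rule ennreal_le_suminf)
    finally show ?thesis .
  next
    case False then show ?thesis by (auto simp: indicator_def)
  qed
  have "(\<integral>\<^sup>+z. indicator (ball (0::real^'n) r) z * ennreal (norm z powr (-g)) \<partial>lborel)
      \<le> (\<Sum>k. ennreal (a k * (omg TYPE('n) * \<rho> k ^ CARD('n))))"
    by (rule nn_int_le_sum_balls[OF pt]) (use r in \<open>auto simp: a_def \<rho>_def\<close>)
  also have "\<dots> = (\<Sum>k. ennreal ((omg TYPE('n) * 2 powr g * r powr (real CARD('n) - g)) * (2 powr (g - real CARD('n)))^k))"
    unfolding a_def \<rho>_def term_eq1[OF r] by (simp add: mult.assoc)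
  also have "\<dots> = ennreal (omg TYPE('n) * 2 powr g * r powr (real CARD('n) - g) / (1 - 2 powr (g - real CARD('n))))"
  proof (intro geom_ennreal)
    have "(2::real) powr (g - real CARD('n)) < 2 powr 0" using g by (intro powr_less_mono) auto
    then show "(2::real) powr (g - real CARD('n)) < 1" by simp
  qed (use g omg_pos[where 'n='n] in auto)
  finally show ?thesis by (simp add: field_simps)
qed

lemma term_eq2:
  fixes r g :: real assumes "r > 0" 
  shows "((r * 2^k) powr (-g)) * (w * (r * 2^(Suc k)) ^ N) = w * 2 powr real N * r powr (real N - g) * (2 powr (real N - g))^k"
proof -
  have h: "(2::real)^m = 2 powr (real m)" for m by (simp add: powr_realpow)
  have e1: "(r * 2^(Suc k)) ^ N = r powr (real N) * 2 powr real N * 2 powr (real k * real N)"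
    using assms by (simp add: h power_mult_distrib powr_realpow[symmetric] powr_powr powr_add[symmetric] algebra_simps del: power_Suc)
  have e2: "(r * 2^k) powr (-g) = r powr (-g) * 2 powr (- real k * g)"
    using assms by (simp add: h powr_mult powr_powr)
  have e3: "(2 powr (real N - g))^k = 2 powr (real k * real N) * 2 powr (- real k * g)"
    by (simp add: powr_realpow[symmetric] powr_powr powr_add[symmetric] algebra_simps)
  have e4: "r powr (real N - g) = r powr real N * r powr (-g)"
    by (simp add: powr_add[symmetric])
  show ?thesis unfolding e1 e2 e3 e4 by (simp add: algebra_simps)
qed

lemma int_compl_ball_pow:
  fixes r g :: real
  assumes r: "r > 0" and g: "g > real CARD('n)"
  shows "(\<integral>\<^sup>+z. indicator (- ball (0::real^'n) r) z * ennreal (norm z powr (-g)) \<partial>lborel)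
     \<le> ennreal (omg TYPE('n) * 2 powr real CARD('n) / (1 - 2 powr (real CARD('n) - g)) * r powr (real CARD('n) - g))"
proof -
  define a where "a k = (r * 2^k) powr (-g)" for k
  define \<rho> where "\<rho> k = r * (2::real)^(Suc k)" for k
  have pt: "indicator (- ball (0::real^'n) r) z * ennreal (norm z powr (-g))
      \<le> (\<Sum>k. ennreal (a k) * indicator (ball 0 (\<rho> k)) z)" for z
  proof (cases "z \<notin> ball 0 r")
    case True
    then have z: "r \<le> norm z" by auto
    obtain m where "norm z / r < 2^m" using real_arch_pow[of 2 "norm z / r"] by auto
    then have "norm z < r * 2^m" using r by (simp add: field_simps)
    also have "\<dots> \<le> r * 2^(Suc m)" using r by simp
    finally have "\<exists>k. norm z < r * 2^(Suc k)" by blast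
    then obtain k where k1: "norm z < r * 2^(Suc k)" and k2: "\<forall>m<k. \<not> norm z < r * 2^(Suc m)"
      using exists_least_iff[of "\<lambda>k. norm z < r * 2^(Suc k)"] by blast
    have k3: "r * 2^k \<le> norm z"
    proof (cases k)
      case 0 then show ?thesis using z by simp
    next
      case (Suc m) then show ?thesis using k2 by auto
    qed
    have "norm z powr (-g) \<le> a k"
      unfolding a_def
    proof (rule powr_mono2')
      show "-g \<le> 0" using g by simp
      have "0 < r" by fact
      then show "0 < r * 2^k" by simp
      show "r * 2^k \<le> norm z" by (rule k3)
    qed
    then have "indicator (- ball (0::real^'n) r) z * ennreal (norm z powr (-g)) \<le> ennreal (a k) * indicator (ball 0 (\<rho> k)) z"
      using True k1 by (auto intro: ennreal_leI simp: \<rho>_def)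
    also have "\<dots> \<le> (\<Sum>k. ennreal (a k) * indicator (ball 0 (\<rho> k)) z)"
      by (rule ennreal_le_suminf)
    finally show ?thesis .
  next
    case False then show ?thesis by (auto simp: indicator_def)
  qed
  have "(\<integral>\<^sup>+z. indicator (- ball (0::real^'n) r) z * ennreal (norm z powr (-g)) \<partial>lborel)
      \<le> (\<Sum>k. ennreal (a k * (omg TYPE('n) * \<rho> k ^ CARD('n))))"
    by (rule nn_int_le_sum_balls[OF pt]) (use r in \<open>auto simp: a_def \<rho>_def\<close>)
  also have "\<dots> = (\<Sum>k. ennreal ((omg TYPE('n) * 2 powr real CARD('n) * r powr (real CARD('n) - g)) * (2 powr (real CARD('n) - g))^k))"
    unfolding a_def \<rho>_def term_eq2[OF r] by (simp add: mult.assoc)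
  also have "\<dots> = ennreal (omg TYPE('n) * 2 powr real CARD('n) * r powr (real CARD('n) - g) / (1 - 2 powr (real CARD('n) - g)))"
  proof (intro geom_ennreal)
    have "(2::real) powr (real CARD('n) - g) < 2 powr 0" using g by (intro powr_less_mono) auto
    then show "(2::real) powr (real CARD('n) - g) < 1" by simp
  qed (use g omg_pos[where 'n='n] in auto)
  finally show ?thesis by (simp add: field_simps)
qed

lemma nn_integral_translate:
  fixes f :: "real^'n \<Rightarrow> ennreal" and x :: "real^'n"
  assumes f: "f \<in> borel_measurable borel"
  shows "(\<integral>\<^sup>+y. f (y - x) \<partial>lborel) = (\<integral>\<^sup>+y. f y \<partial>lborel)"
proof -
  have "(\<integral>\<^sup>+y. f y \<partial>lborel) = (\<integral>\<^sup>+y. f y \<partial>(distr lborel borel ((+) (-x))))"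
    by (simp add: lborel_distr_plus)
  also have "\<dots> = (\<integral>\<^sup>+y. f (-x + y) \<partial>lborel)"
    using f by (subst nn_integral_distr) auto
  finally show ?thesis by simp
qed

lemma meas_norm_powr[measurable]: "(\<lambda>z::real^'n. norm (z - x) powr g) \<in> borel_measurable borel"
proof -
  have "(\<lambda>z::real^'n. norm (z - x)) \<in> borel_measurable borel"
    by (intro borel_measurable_continuous_onI continuous_intros)
  then show ?thesis by measurable
qed

lemma meas_ball[measurable]: "Measurable.pred borel (\<lambda>z::real^'n. z \<in> ball c r)"
  by (simp add: pred_def)

lemma meas_test: "(\<lambda>z::real^'n. indicator (ball c r) z * ennreal (norm (z - x) powr (-g))) \<in> borel_measurable borel"
  by measurable

definition LB :: "(real^'n \<Rightarrow> real) \<Rightarrow> real \<Rightarrow> bool" where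
  "LB f \<theta> \<longleftrightarrow> (\<exists>c>0. \<exists>R>0. \<forall>x. R \<le> norm x \<longrightarrow> c * norm x powr (-\<theta>) \<le> f x)"

definition UB :: "(real^'n \<Rightarrow> real) \<Rightarrow> real \<Rightarrow> bool" where
  "UB f \<theta> \<longleftrightarrow> (\<exists>C>0. \<exists>R>0. \<forall>x. R \<le> norm x \<longrightarrow> f x \<le> C * norm x powr (-\<theta>))"

lemma big_point:
  fixes R K e :: real assumes e: "e > 0"
  shows "\<exists>x::real^'n. R \<le> norm x \<and> 0 < norm x \<and> K < norm x powr e"
proof -
  define s where "s = max (max R 1) ((max K 1 + 1) powr (1/e))"
  have s0: "s > 0" unfolding s_def by simp
  obtain x :: "real^'n" where x: "norm x = s" using vector_choose_size[of s] s0 by auto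
  have "(max K 1 + 1) = ((max K 1 + 1) powr (1/e)) powr e"
    using e by (simp add: powr_powr)
  also have "\<dots> \<le> s powr e"
    using e by (intro powr_mono2) (auto simp: s_def)
  finally have "K < s powr e" by linarith
  moreover have "R \<le> s" unfolding s_def by linarith
  ultimately show ?thesis using x s0 by (intro exI[of _ x]) auto
qed

lemma LB_UB_False:
  fixes f :: "real^'n \<Rightarrow> real"
  assumes "LB f \<theta>" "UB f \<theta>'" "\<theta> < \<theta>'"
  shows False
proof -
  obtain c R where c: "c > 0" "R > 0" and hc: "\<And>x. R \<le> norm x \<Longrightarrow> c * norm x powr (-\<theta>) \<le> f x"
    using assms(1) unfolding LB_def by blast
  obtain C R' where C: "C > 0" "R' > 0" and hC: "\<And>x. R' \<le> norm x \<Longrightarrow> f x \<le> C * norm x powr (-\<theta>')"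
    using assms(2) unfolding UB_def by blast
  obtain x :: "real^'n" where x: "max R R' \<le> norm x" "0 < norm x" "C / c < norm x powr (\<theta>' - \<theta>)"
    using big_point[of "\<theta>' - \<theta>" "max R R'" "C/c"] assms(3) by auto
  have "c * norm x powr (-\<theta>) \<le> C * norm x powr (-\<theta>')" using hc[of x] hC[of x] x by auto
  then have "c * (norm x powr (\<theta>' - \<theta>) * norm x powr (-\<theta>')) \<le> C * norm x powr (-\<theta>')"
    by (simp add: powr_add[symmetric])
  then have "c * norm x powr (\<theta>' - \<theta>) \<le> C" using x by (simp add: mult.assoc[symmetric])
  then show False using x c by (simp add: field_simps)
qed

lemma LB_unbounded:
  fixes f :: "real^'n \<Rightarrow> real"
  assumes "LB f \<theta>" "\<theta> < 0" "bounded (range f)"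
  shows False
proof -
  obtain c R where c: "c > 0" "R > 0" and hc: "\<And>x. R \<le> norm x \<Longrightarrow> c * norm x powr (-\<theta>) \<le> f x"
    using assms(1) unfolding LB_def by blast
  obtain M where M: "\<And>x. norm (f x) \<le> M" using assms(3) unfolding bounded_iff by auto
  obtain x :: "real^'n" where x: "R \<le> norm x" "M / c < norm x powr (-\<theta>)"
    using big_point[of "-\<theta>" R "M/c"] assms(2) by auto
  have "M < c * norm x powr (-\<theta>)" using x c by (simp add: field_simps)
  also have "\<dots> \<le> f x" using hc x by auto
  finally show False using M[of x] by auto
qed

lemma LB_mono:
  fixes f :: "real^'n \<Rightarrow> real"
  assumes "LB f \<theta>" "\<theta> \<le> \<theta>'" shows "LB f \<theta>'"
proof -
  obtain c R where c: "c > 0" "R > 0" and hc: "\<And>x. R \<le> norm x \<Longrightarrow> c * norm x powr (-\<theta>) \<le> f x"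
    using assms(1) unfolding LB_def by blast
  have "c * norm x powr (-\<theta>') \<le> f x" if "max R 1 \<le> norm x" for x
  proof -
    have "norm x powr (-\<theta>') \<le> norm x powr (-\<theta>)" using that assms(2) by (intro powr_mono) auto
    then have "c * norm x powr (-\<theta>') \<le> c * norm x powr (-\<theta>)" using c by (intro mult_left_mono) auto
    then show ?thesis using hc[of x] that by linarith
  qed
  then show ?thesis unfolding LB_def using c by (intro exI[of _ c] conjI exI[of _ "max R 1"]) auto
qed

lemma UB_mono:
  fixes f :: "real^'n \<Rightarrow> real"
  assumes "UB f \<theta>" "\<theta>' \<le> \<theta>" shows "UB f \<theta>'"
proof -
  obtain C R where C: "C > 0" "R > 0" and hC: "\<And>x. R \<le> norm x \<Longrightarrow> f x \<le> C * norm x powr (-\<theta>)"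
    using assms(1) unfolding UB_def by blast
  have "f x \<le> C * norm x powr (-\<theta>')" if "max R 1 \<le> norm x" for x
  proof -
    have "norm x powr (-\<theta>) \<le> norm x powr (-\<theta>')" using that assms(2) by (intro powr_mono) auto
    then have "C * norm x powr (-\<theta>) \<le> C * norm x powr (-\<theta>')" using C by (intro mult_left_mono) auto
    then show ?thesis using hC[of x] that by linarith
  qed
  then show ?thesis unfolding UB_def using C by (intro exI[of _ C] conjI exI[of _ "max R 1"]) auto
qed

lemma LB_from_stmt:
  fixes f :: "real^'n \<Rightarrow> real"
  assumes "\<exists>C>0. \<exists>R. \<forall>x. norm x \<ge> R \<longrightarrow> f x \<ge> C * (1 + norm x) powr (- \<theta>)"
  shows "LB f \<theta>"
proof -
  obtain C R where C: "C > 0" and h: "\<And>x. norm x \<ge> R \<Longrightarrow> f x \<ge> C * (1 + norm x) powr (- \<theta>)"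
    using assms by blast
  define m where "m = min 1 (2 powr (-\<theta>))"
  have m: "m > 0" by (simp add: m_def)
  have "C * m * norm x powr (-\<theta>) \<le> f x" if x: "max R 1 \<le> norm x" for x :: "real^'n"
  proof -
    have "m * norm x powr (-\<theta>) \<le> (1 + norm x) powr (-\<theta>)"
    proof (cases "-\<theta> \<ge> 0")
      case True
      then have "norm x powr (-\<theta>) \<le> (1 + norm x) powr (-\<theta>)" by (intro powr_mono2) auto
      moreover have "m \<le> 1" by (simp add: m_def)
      moreover have "m * norm x powr (-\<theta>) \<le> 1 * norm x powr (-\<theta>)"
        using \<open>m \<le> 1\<close> by (intro mult_right_mono) auto
      ultimately show ?thesis by linarith
    next
      case False
      have "(2 * norm x) powr (-\<theta>) \<le> (1 + norm x) powr (-\<theta>)"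
        using False x by (intro powr_mono2') auto
      moreover have "(2 * norm x) powr (-\<theta>) = 2 powr (-\<theta>) * norm x powr (-\<theta>)"
        by (simp add: powr_mult)
      moreover have "m \<le> 2 powr (-\<theta>)" by (simp add: m_def)
      moreover have "m * norm x powr (-\<theta>) \<le> 2 powr (-\<theta>) * norm x powr (-\<theta>)"
        using \<open>m \<le> 2 powr (-\<theta>)\<close> by (intro mult_right_mono) auto
      ultimately show ?thesis by linarith
    qed
    then have "C * (m * norm x powr (-\<theta>)) \<le> C * (1 + norm x) powr (-\<theta>)"
      using C by (intro mult_left_mono) auto
    then show ?thesis using h[of x] x by (simp add: mult.assoc)
  qed
  then show ?thesis unfolding LB_def using C m by (intro exI[of _ "C*m"] conjI exI[of _ "max R 1"]) auto
qed

lemma UB_from_stmt: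
  fixes f :: "real^'n \<Rightarrow> real"
  assumes "\<exists>C>0. \<exists>R. \<forall>x. norm x \<ge> R \<longrightarrow> f x \<le> C * (1 + norm x) powr (- \<theta>)" "\<theta> \<ge> 0"
  shows "UB f \<theta>"
proof -
  obtain C R where C: "C > 0" and h: "\<And>x. norm x \<ge> R \<Longrightarrow> f x \<le> C * (1 + norm x) powr (- \<theta>)"
    using assms by blast
  have "f x \<le> C * norm x powr (-\<theta>)" if x: "max R 1 \<le> norm x" for x :: "real^'n"
  proof -
    have "(1 + norm x) powr (-\<theta>) \<le> norm x powr (-\<theta>)"
      using x assms(2) by (intro powr_mono2') auto
    then have "C * (1 + norm x) powr (-\<theta>) \<le> C * norm x powr (-\<theta>)" using C by (intro mult_left_mono) auto
    then show ?thesis using h[of x] x by linarith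
  qed
  then show ?thesis unfolding UB_def using C by (intro exI[of _ C] conjI exI[of _ "max R 1"]) auto
qed

lemma aux_alg: "(P::real) * Q / D = E \<Longrightarrow> c * m * Q / D * (w * (P * h)) = c * m * w * h * E"
  by (auto simp: divide_inverse mult_ac)

lemma gsum: "(a::'a::ab_group_add) - b + (b - c) = a - c" by simp

lemma annulus_facts:
  fixes x y :: "real^'n"
  assumes "y \<in> ball ((3/2) *\<^sub>R x) (norm x / 2)"
  shows "norm x \<le> norm y" "norm y \<le> 2 * norm x" "0 < norm (x - y)" "norm (x - y) \<le> norm x"
proof -
  have d: "norm ((3/2) *\<^sub>R x - y) < norm x / 2" using assms by (simp add: dist_norm)
  have e: "(3/2::real) *\<^sub>R x = x + (1/2) *\<^sub>R x"
  proof -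
    have "(3/2::real) *\<^sub>R x = (1 + 1/2) *\<^sub>R x" by simp
    also have "\<dots> = x + (1/2) *\<^sub>R x" by (simp only: scaleR_add_left scaleR_one)
    finally show ?thesis .
  qed
  have n32: "norm ((3/2) *\<^sub>R x) = 3/2 * norm x" by simp
  have n12: "norm (x - (3/2) *\<^sub>R x) = norm x / 2"
  proof -
    have "x - (3/2) *\<^sub>R x = - ((1/2) *\<^sub>R x)" unfolding e by simp
    then show ?thesis by simp
  qed
  have "norm ((3/2) *\<^sub>R x) \<le> norm y + norm ((3/2) *\<^sub>R x - y)" by (rule norm_triangle_sub)
  then show "norm x \<le> norm y" using d n32 by linarith
  have "norm y \<le> norm ((3/2) *\<^sub>R x) + norm (y - (3/2) *\<^sub>R x)" by (rule norm_triangle_sub)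
  then show "norm y \<le> 2 * norm x" using d n32 by (simp add: norm_minus_commute)
  have "norm (x - y) \<le> norm (x - (3/2) *\<^sub>R x) + norm ((3/2) *\<^sub>R x - y)"
    using norm_triangle_ineq[of "x - (3/2) *\<^sub>R x" "(3/2) *\<^sub>R x - y"] gsum[of x "(3/2) *\<^sub>R x" y] by simp
  then show "norm (x - y) \<le> norm x" using d n12 by linarith
  have "norm (x - (3/2) *\<^sub>R x) \<le> norm (x - y) + norm (y - (3/2) *\<^sub>R x)"
    using norm_triangle_ineq[of "x - y" "y - (3/2) *\<^sub>R x"] gsum[of x y "(3/2) *\<^sub>R x"] by simp
  moreover have "norm (y - (3/2) *\<^sub>R x) = norm ((3/2) *\<^sub>R x - y)" by (rule norm_minus_commute)
  ultimately show "0 < norm (x - y)" using d n12 by linarith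
qed

lemma powr_lower_annulus:
  fixes s t e :: real assumes "0 < t" "t \<le> s" "s \<le> 2 * t"
  shows "min 1 (2 powr e) * t powr e \<le> s powr e"
proof (cases "e \<ge> 0")
  case True
  have "t powr e \<le> s powr e" using assms True by (intro powr_mono2) auto
  moreover have "min 1 (2 powr e) * t powr e \<le> 1 * t powr e" by (intro mult_right_mono) auto
  ultimately show ?thesis by linarith
next
  case False
  have "(2 * t) powr e \<le> s powr e" using assms False by (intro powr_mono2') auto
  moreover have "(2 * t) powr e = 2 powr e * t powr e" by (simp add: powr_mult)
  moreover have "min 1 (2 powr e) * t powr e \<le> 2 powr e * t powr e" by (intro mult_right_mono) auto
  ultimately show ?thesis by linarith
qed

lemma annulus:
  fixes u v :: "real^'n \<Rightarrow> real"
  assumes upos: "\<forall>x. u x > 0" and vpos: "\<forall>x. v x > 0" and p: "p > 0"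
    and \<alpha>: "0 < \<alpha>" "\<alpha> < real CARD('n)"
    and eq: "\<forall>x. riesz_pot \<alpha> (\<lambda>y. u y powr p) x = ennreal (v x)"
    and lb: "LB u \<theta>"
  shows "LB v (p * \<theta> - \<alpha>)"
proof -
  obtain c R where c: "c > 0" "R > 0" and hc: "\<And>x. R \<le> norm x \<Longrightarrow> c * norm x powr (-\<theta>) \<le> u x"
    using lb unfolding LB_def by blast
  define N where "N = real CARD('n)"
  define m where "m = min 1 (2 powr (-(p*\<theta>)))"
  define w where "w = omg TYPE('n)"
  have m: "m > 0" by (simp add: m_def)
  have w: "w > 0" unfolding w_def by (rule omg_pos)
  define c' where "c' = c powr p * m * w * (1/2)^CARD('n)"
  have c': "c' > 0" unfolding c'_def using c m w by simp
  have main: "c' * norm x powr (-(p*\<theta> - \<alpha>)) \<le> v x" if x: "R \<le> norm x" for x :: "real^'n"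
  proof -
    define t where "t = norm x"
    have t: "t > 0" using x c unfolding t_def by linarith
    define B where "B = ball ((3/2) *\<^sub>R x) (t/2)"
    define K where "K = c powr p * m * t powr (-(p*\<theta>)) / t powr (N - \<alpha>)"
    have K: "K \<ge> 0" unfolding K_def using c m by simp
    have pt: "K \<le> u y powr p / norm (x - y) powr (N - \<alpha>)" if y: "y \<in> B" for y
    proof -
      note f = annulus_facts[OF y[unfolded B_def t_def]]
      have "(c * norm y powr (-\<theta>)) powr p \<le> u y powr p"
        using hc[of y] f x c p by (intro powr_mono2) auto
      moreover have "(c * norm y powr (-\<theta>)) powr p = c powr p * norm y powr (-(p*\<theta>))"
        using c by (simp add: powr_mult powr_powr algebra_simps)
      moreover have "m * t powr (-(p*\<theta>)) \<le> norm y powr (-(p*\<theta>))"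
        unfolding m_def using f t unfolding t_def by (intro powr_lower_annulus) auto
      ultimately have num: "c powr p * m * t powr (-(p*\<theta>)) \<le> u y powr p"
        using mult_left_mono[of "m * t powr (-(p*\<theta>))" "norm y powr (-(p*\<theta>))" "c powr p"]
        by (simp add: mult.assoc)
      have den: "norm (x - y) powr (N - \<alpha>) \<le> t powr (N - \<alpha>)"
        using f \<alpha> unfolding t_def N_def by (intro powr_mono2) auto
      have "0 < norm (x - y) powr (N - \<alpha>)" using f by simp
      then show ?thesis unfolding K_def
        using num den c m by (intro frac_le) auto
    qed
    have "ennreal (K * (w * (t/2)^CARD('n))) = (\<integral>\<^sup>+y. ennreal K * indicator B y \<partial>lborel)"
      using K t omg_pos[where 'n='n] by (simp add: nn_integral_cmult_indicator B_def emeasure_ball_vec w_def ennreal_mult)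
    also have "\<dots> \<le> (\<integral>\<^sup>+y. ennreal (u y powr p / norm (x - y) powr (N - \<alpha>)) \<partial>lborel)"
      by (intro nn_integral_mono) (auto simp: indicator_def intro!: ennreal_leI pt)
    also have "\<dots> = ennreal (v x)" using eq unfolding riesz_pot_def N_def by simp
    finally have le: "K * (w * (t/2)^CARD('n)) \<le> v x"
      using vpos by (subst (asm) ennreal_le_iff) (auto intro: less_imp_le)
    have "K * (w * (t/2)^CARD('n)) = c' * t powr (-(p*\<theta> - \<alpha>))"
    proof -
      have e1: "(t/2)^CARD('n) = t powr N * (1/2)^CARD('n)"
        using t by (simp add: N_def powr_realpow power_divide field_simps)
      have e2: "t powr N * t powr (-(p*\<theta>)) / t powr (N - \<alpha>) = t powr (-(p*\<theta> - \<alpha>))"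
        using t by (simp add: powr_diff[symmetric] powr_add[symmetric] algebra_simps)
      show ?thesis unfolding K_def c'_def e1 by (rule aux_alg[OF e2])
    qed
    then show ?thesis using le unfolding t_def by simp
  qed
  show ?thesis unfolding LB_def using c' c by (intro exI[of _ c'] conjI exI[of _ R] allI impI main) auto
qed

lemma ball_lower:
  fixes u v :: "real^'n \<Rightarrow> real"
  assumes upos: "\<forall>x. u x > 0" and vpos: "\<forall>x. v x > 0" and p: "p > 0"
    and um: "u \<in> borel_measurable lborel" and ub: "bounded (range u)"
    and \<alpha>: "0 < \<alpha>" "\<alpha> < real CARD('n)"
    and eq: "\<forall>x. riesz_pot \<alpha> (\<lambda>y. u y powr p) x = ennreal (v x)"
  shows "LB v (real CARD('n) - \<alpha>)"
proof -
  define N where "N = real CARD('n)"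
  define f where "f y = ennreal (u y powr p) * indicator (ball (0::real^'n) 1) y" for y
  have [measurable]: "u \<in> borel_measurable lborel" by (rule um)
  have fm: "f \<in> borel_measurable lborel" unfolding f_def by measurable
  define K0 where "K0 = (\<integral>\<^sup>+y. f y \<partial>lborel)"
  have "{y \<in> space lborel. f y \<noteq> 0} = ball 0 1"
    using upos by (auto simp: f_def indicator_def) (metis less_irrefl)
  moreover have "emeasure lborel (ball (0::real^'n) 1) \<noteq> 0"
    using omg_pos[where 'n='n] by (simp add: emeasure_ball_vec)
  ultimately have K0ne: "K0 \<noteq> 0" unfolding K0_def using nn_integral_0_iff[OF fm] by simp
  obtain M where M: "\<And>x. norm (u x) \<le> M" using ub unfolding bounded_iff by auto
  have "K0 \<le> (\<integral>\<^sup>+y. ennreal (M powr p) * indicator (ball (0::real^'n) 1) y \<partial>lborel)"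
    unfolding K0_def f_def
  proof (intro nn_integral_mono)
    fix y
    have "u y powr p \<le> M powr p" using M[of y] upos p by (intro powr_mono2) (auto intro: less_imp_le)
    then show "ennreal (u y powr p) * indicator (ball 0 1) y \<le> ennreal (M powr p) * indicator (ball (0::real^'n) 1) y"
      by (auto simp: indicator_def intro: ennreal_leI)
  qed
  also have "\<dots> = ennreal (M powr p) * emeasure lborel (ball (0::real^'n) 1)"
    by (simp add: nn_integral_cmult_indicator)
  also have "\<dots> < \<infinity>" by (simp add: emeasure_ball_vec ennreal_mult_less_top)
  finally have K0fin: "K0 < \<infinity>" .
  define \<kappa> where "\<kappa> = enn2real K0"
  have K0eq: "K0 = ennreal \<kappa>" unfolding \<kappa>_def using K0fin by (simp add: less_top)
  have \<kappa>: "\<kappa> > 0" unfolding \<kappa>_def using K0ne K0fin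
    by (simp add: enn2real_positive_iff less_top[symmetric] zero_less_iff_neq_zero)
  define c where "c = \<kappa> * 2 powr (-(N - \<alpha>))"
  have c: "c > 0" unfolding c_def using \<kappa> by simp
  have main: "c * norm x powr (-(N - \<alpha>)) \<le> v x" if x: "1 \<le> norm x" for x :: "real^'n"
  proof -
    define t where "t = norm x"
    define g where "g = (2 * t) powr (-(N - \<alpha>))"
    have pt: "f y * ennreal g \<le> ennreal (u y powr p / norm (x - y) powr (N - \<alpha>))" for y
    proof (cases "y \<in> ball 0 1")
      case True
      then have ny: "norm y < 1" by simp
      have d1: "norm (x - y) \<le> 2 * t" using norm_triangle_ineq4[of x y] ny x unfolding t_def by linarith
      have d2: "0 < norm (x - y)" using norm_triangle_ineq2[of x y] ny x by linarith
      have "g \<le> norm (x - y) powr (-(N - \<alpha>))" unfolding g_def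
        using d1 d2 \<alpha> unfolding N_def by (intro powr_mono2') auto
      moreover have "norm (x - y) powr (-(N-\<alpha>)) = inverse (norm (x - y) powr (N - \<alpha>))" by (rule powr_minus)
      ultimately have "g \<le> inverse (norm (x - y) powr (N - \<alpha>))" by simp
      then have "u y powr p * g \<le> u y powr p * inverse (norm (x - y) powr (N - \<alpha>))"
        by (rule mult_left_mono) simp
      then have "u y powr p * g \<le> u y powr p / norm (x - y) powr (N - \<alpha>)"
        by (simp add: divide_inverse)
      then show ?thesis using True upos unfolding f_def g_def
        by (simp add: ennreal_mult[symmetric] ennreal_leI)
    next
      case False then show ?thesis by (simp add: f_def)
    qed
    have "ennreal (\<kappa> * g) = K0 * ennreal g"
      unfolding K0eq g_def using \<kappa> by (simp add: ennreal_mult)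
    also have "\<dots> = (\<integral>\<^sup>+y. f y * ennreal g \<partial>lborel)"
      unfolding K0_def by (rule nn_integral_multc[symmetric]) (rule fm)
    also have "\<dots> \<le> (\<integral>\<^sup>+y. ennreal (u y powr p / norm (x - y) powr (N - \<alpha>)) \<partial>lborel)"
      by (intro nn_integral_mono pt)
    also have "\<dots> = ennreal (v x)" using eq unfolding riesz_pot_def N_def by simp
    finally have "\<kappa> * g \<le> v x" using vpos by (subst (asm) ennreal_le_iff) (auto intro: less_imp_le)
    moreover have "\<kappa> * g = c * t powr (-(N - \<alpha>))"
      unfolding g_def c_def by (simp add: powr_mult)
    ultimately show ?thesis unfolding t_def by simp
  qed
  show ?thesis unfolding LB_def using c by (intro exI[of _ c] conjI exI[of _ 1] allI impI main[unfolded N_def]) auto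
qed

lemma meas_norm_powr0[measurable]: "(\<lambda>z::real^'n. norm z powr g) \<in> borel_measurable borel"
  using meas_norm_powr[of 0 g] by simp

lemma scale_int:
  fixes h :: "real^'n \<Rightarrow> real" and S :: "(real^'n) set"
  assumes hm: "h \<in> borel_measurable borel" and Sm: "S \<in> sets borel" and h0: "\<And>z. h z \<ge> 0"
    and bnd: "(\<integral>\<^sup>+z. indicator S z * ennreal (h z) \<partial>lborel) \<le> ennreal B"
    and c: "c \<ge> 0" and B: "B \<ge> 0"
  shows "(\<integral>\<^sup>+z. indicator S z * ennreal (c * h z) \<partial>lborel) \<le> ennreal (c * B)"
proof -
  have "(\<integral>\<^sup>+z. indicator S z * ennreal (c * h z) \<partial>lborel) = (\<integral>\<^sup>+z. ennreal c * (indicator S z * ennreal (h z)) \<partial>lborel)"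
    using c h0 by (intro nn_integral_cong) (simp add: ennreal_mult mult_ac)
  also have "\<dots> = ennreal c * (\<integral>\<^sup>+z. indicator S z * ennreal (h z) \<partial>lborel)"
    using hm Sm by (intro nn_integral_cmult) auto
  also have "\<dots> \<le> ennreal c * ennreal B" by (intro mult_left_mono bnd) auto
  also have "\<dots> = ennreal (c * B)" using c B by (simp add: ennreal_mult)
  finally show ?thesis .
qed

lemma ball_int_c:
  fixes g :: real assumes g: "0 \<le> g" "g < real CARD('n)"
  shows "\<exists>K>0. \<forall>r>0. \<forall>c\<ge>0. (\<integral>\<^sup>+z. indicator (ball (0::real^'n) r) z * ennreal (c * norm z powr (-g)) \<partial>lborel)
      \<le> ennreal (c * (K * r powr (real CARD('n) - g)))"
proof -
  define K where "K = omg TYPE('n) * 2 powr g / (1 - 2 powr (g - real CARD('n)))"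
  have "(2::real) powr (g - real CARD('n)) < 2 powr 0" using g by (intro powr_less_mono) auto
  then have K: "K > 0" unfolding K_def using omg_pos[where 'n='n] by simp
  show ?thesis
  proof (intro exI[of _ K] conjI allI impI K)
    fix r c :: real assume r: "r > 0" and c: "c \<ge> 0"
    show "(\<integral>\<^sup>+z. indicator (ball (0::real^'n) r) z * ennreal (c * norm z powr (-g)) \<partial>lborel)
      \<le> ennreal (c * (K * r powr (real CARD('n) - g)))"
      by (rule scale_int[OF _ _ _ int_ball_pow[OF r g, folded K_def] c]) (use K in auto)
  qed
qed

lemma tail_int_c:
  fixes g :: real assumes g: "g > real CARD('n)"
  shows "\<exists>K>0. \<forall>r>0. \<forall>c\<ge>0. (\<integral>\<^sup>+z. indicator (- ball (0::real^'n) r) z * ennreal (c * norm z powr (-g)) \<partial>lborel)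
      \<le> ennreal (c * (K * r powr (real CARD('n) - g)))"
proof -
  define K where "K = omg TYPE('n) * 2 powr real CARD('n) / (1 - 2 powr (real CARD('n) - g))"
  have "(2::real) powr (real CARD('n) - g) < 2 powr 0" using g by (intro powr_less_mono) auto
  then have K: "K > 0" unfolding K_def using omg_pos[where 'n='n] by simp
  show ?thesis
  proof (intro exI[of _ K] conjI allI impI K)
    fix r c :: real assume r: "r > 0" and c: "c \<ge> 0"
    show "(\<integral>\<^sup>+z. indicator (- ball (0::real^'n) r) z * ennreal (c * norm z powr (-g)) \<partial>lborel)
      \<le> ennreal (c * (K * r powr (real CARD('n) - g)))"
      by (rule scale_int[OF _ _ _ int_compl_ball_pow[OF r g, folded K_def] c]) (use K in auto)
  qed
qed


lemma e3: fixes a b c g :: ennreal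
  shows "g \<le> a \<Longrightarrow> g \<le> a + b + c" "g \<le> b \<Longrightarrow> g \<le> a + b + c" "g \<le> c \<Longrightarrow> g \<le> a + b + c"
  by (auto intro: order_trans[OF _ add_increasing2] order_trans[OF _ add_increasing] simp: add_increasing add_increasing2)

lemma conv_upper:
  fixes u v :: "real^'n \<Rightarrow> real"
  assumes upos: "\<forall>x. u x > 0" and vpos: "\<forall>x. v x > 0" and p: "p > 0"
    and ub: "bounded (range u)"
    and \<alpha>: "0 < \<alpha>" "\<alpha> < real CARD('n)"
    and eq: "\<forall>x. riesz_pot \<alpha> (\<lambda>y. u y powr p) x = ennreal (v x)"
    and UBu: "UB u \<theta>" and b1: "\<alpha> < p * \<theta>" and b2: "p * \<theta> < real CARD('n)"
  shows "UB v (p * \<theta> - \<alpha>)"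
proof -
  define N where "N = real CARD('n)"
  define \<beta> where "\<beta> = p * \<theta>"
  have \<beta>: "0 \<le> \<beta>" "\<beta> < N" "\<alpha> < \<beta>" using b1 b2 \<alpha> unfolding \<beta>_def N_def by auto
  obtain C R where C: "C > 0" "R > 0" and hC: "\<And>x. R \<le> norm x \<Longrightarrow> u x \<le> C * norm x powr (-\<theta>)"
    using UBu unfolding UB_def by blast
  obtain M where M: "\<And>x. norm (u x) \<le> M" using ub unfolding bounded_iff by auto
  define K where "K = max (C powr p) (M powr p * R powr \<beta>)"
  have K: "K > 0" unfolding K_def using C by (simp add: less_max_iff_disj)
  have uK: "u y powr p \<le> K * norm y powr (-\<beta>)" if y: "y \<noteq> 0" for y
  proof (cases "R \<le> norm y")
    case True
    have "u y powr p \<le> (C * norm y powr (-\<theta>)) powr p"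
      using hC[OF True] upos p by (intro powr_mono2) (auto intro: less_imp_le)
    also have "\<dots> = C powr p * norm y powr (-\<beta>)"
      using C by (simp add: powr_mult powr_powr \<beta>_def algebra_simps)
    also have "\<dots> \<le> K * norm y powr (-\<beta>)" unfolding K_def by (intro mult_right_mono) auto
    finally show ?thesis .
  next
    case False
    have "u y powr p \<le> M powr p" using M[of y] upos p by (intro powr_mono2) (auto intro: less_imp_le)
    also have "\<dots> = M powr p * R powr \<beta> * R powr (-\<beta>)" using C by (simp add: powr_minus)
    also have "\<dots> \<le> M powr p * R powr \<beta> * norm y powr (-\<beta>)"
      using False y \<beta> by (intro mult_left_mono powr_mono2') auto
    also have "\<dots> \<le> K * norm y powr (-\<beta>)" unfolding K_def by (intro mult_right_mono) auto
    finally show ?thesis .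
  qed
  obtain K1 where K1: "K1 > 0" and hK1: "\<And>r c. r > 0 \<Longrightarrow> c \<ge> 0 \<Longrightarrow>
      (\<integral>\<^sup>+z. indicator (ball (0::real^'n) r) z * ennreal (c * norm z powr (-\<beta>)) \<partial>lborel)
      \<le> ennreal (c * (K1 * r powr (N - \<beta>)))"
    using ball_int_c[where 'n='n, of \<beta>] \<beta> unfolding N_def by auto
  obtain K2 where K2: "K2 > 0" and hK2: "\<And>r c. r > 0 \<Longrightarrow> c \<ge> 0 \<Longrightarrow>
      (\<integral>\<^sup>+z. indicator (ball (0::real^'n) r) z * ennreal (c * norm z powr (-(N - \<alpha>))) \<partial>lborel)
      \<le> ennreal (c * (K2 * r powr (N - (N - \<alpha>))))"
    using ball_int_c[where 'n='n, of "N - \<alpha>"] \<alpha> unfolding N_def by auto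
  obtain K3 where K3: "K3 > 0" and hK3: "\<And>r c. r > 0 \<Longrightarrow> c \<ge> 0 \<Longrightarrow>
      (\<integral>\<^sup>+z. indicator (- ball (0::real^'n) r) z * ennreal (c * norm z powr (-(\<beta> + (N - \<alpha>)))) \<partial>lborel)
      \<le> ennreal (c * (K3 * r powr (N - (\<beta> + (N - \<alpha>)))))"
    using tail_int_c[where 'n='n, of "\<beta> + (N - \<alpha>)"] \<beta> unfolding N_def by auto
  define D where "D = (K * K1 + K * K2 + K * 3 powr (N - \<alpha>) * K3) * 2 powr (\<beta> - \<alpha>)"
  have D: "D > 0" unfolding D_def using K K1 K2 K3 by (simp add: add_pos_pos)
  have main: "v x \<le> D * norm x powr (-(\<beta> - \<alpha>))" if x: "1 \<le> norm x" for x :: "real^'n"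
  proof -
    define t where "t = norm x"
    define s where "s = t / 2"
    have s: "s > 0" "t = 2 * s" using x unfolding s_def t_def by auto
    define c1 where "c1 = K * s powr (-(N - \<alpha>))"
    define c2 where "c2 = K * s powr (-\<beta>)"
    define c3 where "c3 = K * 3 powr (N - \<alpha>)"
    have c123: "c1 \<ge> 0" "c2 \<ge> 0" "c3 \<ge> 0" unfolding c1_def c2_def c3_def using K by auto
    define F1 where "F1 y = indicator (ball 0 s) y * ennreal (c1 * norm y powr (-\<beta>))" for y :: "real^'n"
    define F2 where "F2 y = indicator (ball 0 s) (y - x) * ennreal (c2 * norm (y - x) powr (-(N - \<alpha>)))" for y :: "real^'n"
    define F3 where "F3 y = indicator (- ball 0 s) y * ennreal (c3 * norm y powr (-(\<beta> + (N - \<alpha>))))" for y :: "real^'n"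
    have pt: "ennreal (u y powr p / norm (x - y) powr (N - \<alpha>)) \<le> F1 y + F2 y + F3 y" if y0: "y \<noteq> 0" for y
    proof -
      define G where "G = K * norm y powr (-\<beta>) * norm (x - y) powr (-(N - \<alpha>))"
      have G0: "G \<ge> 0" unfolding G_def using K by simp
      have LG: "u y powr p / norm (x - y) powr (N - \<alpha>) \<le> G"
      proof (cases "y = x")
        case True then show ?thesis using G0 by simp
      next
        case False
        have pm: "norm (x - y) powr (-(N - \<alpha>)) = inverse (norm (x - y) powr (N - \<alpha>))" by (rule powr_minus)
        have "u y powr p / norm (x - y) powr (N - \<alpha>) = u y powr p * norm (x - y) powr (-(N - \<alpha>))"
          unfolding pm by (simp add: divide_inverse)
        also have "\<dots> \<le> K * norm y powr (-\<beta>) * norm (x - y) powr (-(N - \<alpha>))"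
          using uK[OF y0] by (intro mult_right_mono) auto
        finally show ?thesis unfolding G_def .
      qed
      have "ennreal G \<le> F1 y + F2 y + F3 y"
      proof (cases "y \<in> ball 0 s")
        case True
        then have ny: "norm y < s" by simp
        have dxy: "s \<le> norm (x - y)" using norm_triangle_ineq2[of x y] ny s unfolding t_def by linarith
        have "norm (x - y) powr (-(N - \<alpha>)) \<le> s powr (-(N - \<alpha>))"
          using dxy s \<alpha> unfolding N_def by (intro powr_mono2') auto
        then have "G \<le> K * norm y powr (-\<beta>) * s powr (-(N - \<alpha>))"
          unfolding G_def using K by (intro mult_left_mono) auto
        also have "\<dots> = c1 * norm y powr (-\<beta>)" unfolding c1_def by (simp add: mult_ac)
        finally have "ennreal G \<le> F1 y" unfolding F1_def using True by (auto simp: indicator_def intro!: ennreal_leI)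
        then show ?thesis by (rule e3(1))
      next
        case False
        then have ny: "s \<le> norm y" by simp
        show ?thesis
        proof (cases "y - x \<in> ball 0 s")
          case True
          have "norm y powr (-\<beta>) \<le> s powr (-\<beta>)" using ny s \<beta> by (intro powr_mono2') auto
          then have "G \<le> K * s powr (-\<beta>) * norm (x - y) powr (-(N - \<alpha>))"
            unfolding G_def using K by (intro mult_right_mono mult_left_mono) auto
          also have "\<dots> = c2 * norm (y - x) powr (-(N - \<alpha>))" unfolding c2_def by (simp add: norm_minus_commute)
          finally have "ennreal G \<le> F2 y" unfolding F2_def using True by (auto simp: indicator_def intro!: ennreal_leI)
          then show ?thesis by (rule e3(2))
        next
          case False2: False
          then have nxy: "s \<le> norm (x - y)" by (simp add: norm_minus_commute)
          have "norm y \<le> norm x + norm (y - x)" using norm_triangle_sub[of y x] by simp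
          moreover have "norm (y - x) = norm (x - y)" by (rule norm_minus_commute)
          ultimately have "norm y \<le> 3 * norm (x - y)" using nxy s unfolding t_def by linarith
          then have "norm (x - y) powr (-(N - \<alpha>)) \<le> (norm y / 3) powr (-(N - \<alpha>))"
            using ny s \<alpha> unfolding N_def by (intro powr_mono2') auto
          also have "\<dots> = 3 powr (N - \<alpha>) * norm y powr (-(N - \<alpha>))"
          proof -
            have "(norm y / 3) powr (-(N - \<alpha>)) = norm y powr (-(N - \<alpha>)) / 3 powr (-(N - \<alpha>))"
              by (rule powr_divide)
            moreover have "(3::real) powr (-(N - \<alpha>)) = inverse (3 powr (N - \<alpha>))" by (rule powr_minus)
            ultimately show ?thesis by (simp only: divide_inverse inverse_inverse_eq mult.commute)
          qed
          finally have "G \<le> K * norm y powr (-\<beta>) * (3 powr (N - \<alpha>) * norm y powr (-(N - \<alpha>)))"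
            unfolding G_def using K by (intro mult_left_mono) auto
          also have "\<dots> = c3 * (norm y powr (-\<beta>) * norm y powr (-(N - \<alpha>)))"
            unfolding c3_def by (simp add: mult_ac)
          also have "norm y powr (-\<beta>) * norm y powr (-(N - \<alpha>)) = norm y powr (-(\<beta> + (N - \<alpha>)))"
            by (simp add: powr_add[symmetric])
          finally have "ennreal G \<le> F3 y" unfolding F3_def using False by (auto simp: indicator_def intro!: ennreal_leI)
          then show ?thesis by (rule e3(3))
        qed
      qed
      then show ?thesis using LG by (meson ennreal_leI order_trans)
    qed
    have mF1: "F1 \<in> borel_measurable lborel" unfolding F1_def by measurable
    have mF2: "F2 \<in> borel_measurable lborel" unfolding F2_def by measurable
    have mF3: "F3 \<in> borel_measurable lborel" unfolding F3_def by measurable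
    have I1: "(\<integral>\<^sup>+y. F1 y \<partial>lborel) \<le> ennreal (c1 * (K1 * s powr (N - \<beta>)))"
      unfolding F1_def by (rule hK1) (use s c123 in auto)
    have "(\<integral>\<^sup>+y. F2 y \<partial>lborel) = (\<integral>\<^sup>+z. indicator (ball (0::real^'n) s) z * ennreal (c2 * norm z powr (-(N - \<alpha>))) \<partial>lborel)"
      unfolding F2_def by (rule nn_integral_translate) measurable
    also have "\<dots> \<le> ennreal (c2 * (K2 * s powr (N - (N - \<alpha>))))"
      by (rule hK2) (use s c123 in auto)
    finally have I2: "(\<integral>\<^sup>+y. F2 y \<partial>lborel) \<le> ennreal (c2 * (K2 * s powr (N - (N - \<alpha>))))" .
    have I3: "(\<integral>\<^sup>+y. F3 y \<partial>lborel) \<le> ennreal (c3 * (K3 * s powr (N - (\<beta> + (N - \<alpha>)))))"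
      unfolding F3_def by (rule hK3) (use s c123 in auto)
    have "ennreal (v x) = (\<integral>\<^sup>+y. ennreal (u y powr p / norm (x - y) powr (N - \<alpha>)) \<partial>lborel)"
      using eq unfolding riesz_pot_def N_def by simp
    also have "\<dots> \<le> (\<integral>\<^sup>+y. F1 y + F2 y + F3 y \<partial>lborel)"
      by (intro nn_integral_mono_AE) (use AE_lborel_singleton[of 0] pt in \<open>auto elim!: eventually_mono\<close>)
    also have "\<dots> = (\<integral>\<^sup>+y. F1 y \<partial>lborel) + (\<integral>\<^sup>+y. F2 y \<partial>lborel) + (\<integral>\<^sup>+y. F3 y \<partial>lborel)"
      using mF1 mF2 mF3 by (simp add: nn_integral_add)
    also have "\<dots> \<le> ennreal (c1 * (K1 * s powr (N - \<beta>))) + ennreal (c2 * (K2 * s powr (N - (N - \<alpha>))))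
        + ennreal (c3 * (K3 * s powr (N - (\<beta> + (N - \<alpha>)))))"
      by (intro add_mono I1 I2 I3)
    also have "\<dots> = ennreal (c1 * (K1 * s powr (N - \<beta>)) + c2 * (K2 * s powr (N - (N - \<alpha>)))
        + c3 * (K3 * s powr (N - (\<beta> + (N - \<alpha>)))))"
      using c123 K1 K2 K3 by (simp add: ennreal_plus[symmetric] del: ennreal_plus)
    finally have le: "v x \<le> c1 * (K1 * s powr (N - \<beta>)) + c2 * (K2 * s powr (N - (N - \<alpha>)))
        + c3 * (K3 * s powr (N - (\<beta> + (N - \<alpha>))))"
      using c123 K1 K2 K3 s by (subst (asm) ennreal_le_iff) (auto intro!: add_nonneg_nonneg mult_nonneg_nonneg)
    have e1: "c1 * (K1 * s powr (N - \<beta>)) = K * K1 * s powr (\<alpha> - \<beta>)"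
      unfolding c1_def by (simp add: mult_ac powr_add[symmetric])
    have e2: "c2 * (K2 * s powr (N - (N - \<alpha>))) = K * K2 * s powr (\<alpha> - \<beta>)"
      unfolding c2_def by (simp add: mult_ac powr_add[symmetric])
    have e3': "c3 * (K3 * s powr (N - (\<beta> + (N - \<alpha>)))) = K * 3 powr (N - \<alpha>) * K3 * s powr (\<alpha> - \<beta>)"
    proof -
      have x: "N - (\<beta> + (N - \<alpha>)) = \<alpha> - \<beta>" by simp
      show ?thesis by (simp only: c3_def x mult.assoc)
    qed
    have e4: "s powr (\<alpha> - \<beta>) = 2 powr (\<beta> - \<alpha>) * t powr (-(\<beta> - \<alpha>))"
    proof -
      have a1: "s powr (\<alpha> - \<beta>) = t powr (\<alpha> - \<beta>) / 2 powr (\<alpha> - \<beta>)" unfolding s_def by (rule powr_divide)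
      have a2: "1 / (2::real) powr (\<alpha> - \<beta>) = 2 powr (\<beta> - \<alpha>)" using powr_minus_divide[of 2 "\<alpha> - \<beta>"] by simp
      have a3: "t powr (\<alpha> - \<beta>) / 2 powr (\<alpha> - \<beta>) = t powr (\<alpha> - \<beta>) * (1 / 2 powr (\<alpha> - \<beta>))" by simp
      have a4: "-(\<beta> - \<alpha>) = \<alpha> - \<beta>" by simp
      show ?thesis unfolding a1 a3 a2 a4 by (rule mult.commute)
    qed
    have "v x \<le> (K * K1 + K * K2 + K * 3 powr (N - \<alpha>) * K3) * s powr (\<alpha> - \<beta>)"
      using le unfolding e1 e2 e3' by (simp add: algebra_simps)
    also have "\<dots> = D * t powr (-(\<beta> - \<alpha>))" unfolding D_def e4 by (simp add: mult_ac)
    finally show ?thesis unfolding t_def .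
  qed
  show ?thesis unfolding UB_def \<beta>_def[symmetric] using D
    by (intro exI[of _ D] conjI exI[of _ 1] allI impI main) auto
qed

lemma UB_in_Lp:
  fixes f :: "real^'n \<Rightarrow> real"
  assumes fm: "f \<in> borel_measurable lborel" and fpos: "\<forall>x. f x > 0" and fb: "bounded (range f)"
    and UBf: "UB f \<theta>" and r: "r > 0" and big: "\<theta> * r > real CARD('n)"
  shows "in_Lp r f"
proof -
  define N where "N = real CARD('n)"
  obtain C R where C: "C > 0" "R > 0" and hC: "\<And>x. R \<le> norm x \<Longrightarrow> f x \<le> C * norm x powr (-\<theta>)"
    using UBf unfolding UB_def by blast
  obtain M where M: "\<And>x. norm (f x) \<le> M" using fb unfolding bounded_iff by auto
  obtain K3 where K3: "K3 > 0" and hK3: "\<And>r' c. r' > 0 \<Longrightarrow> c \<ge> 0 \<Longrightarrow>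
      (\<integral>\<^sup>+z. indicator (- ball (0::real^'n) r') z * ennreal (c * norm z powr (-(\<theta> * r))) \<partial>lborel)
      \<le> ennreal (c * (K3 * r' powr (N - \<theta> * r)))"
    using tail_int_c[where 'n='n, of "\<theta> * r"] big unfolding N_def by auto
  define A where "A x = indicator (ball (0::real^'n) R) x * ennreal (M powr r)" for x
  define B where "B x = indicator (- ball (0::real^'n) R) x * ennreal (C powr r * norm x powr (-(\<theta> * r)))" for x
  have pt: "ennreal (\<bar>f x\<bar> powr r) \<le> A x + B x" for x
  proof (cases "x \<in> ball 0 R")
    case True
    have "\<bar>f x\<bar> powr r \<le> M powr r" using M[of x] r by (intro powr_mono2) auto
    then have "ennreal (\<bar>f x\<bar> powr r) \<le> A x" unfolding A_def using True by (auto intro: ennreal_leI)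
    then show ?thesis by (simp add: add_increasing2)
  next
    case False
    then have nx: "R \<le> norm x" by simp
    have "\<bar>f x\<bar> powr r \<le> (C * norm x powr (-\<theta>)) powr r"
      using hC[OF nx] fpos[rule_format, of x] r by (intro powr_mono2) auto
    also have "\<dots> = C powr r * norm x powr (-(\<theta> * r))"
      using C by (simp add: powr_mult powr_powr)
    finally have "ennreal (\<bar>f x\<bar> powr r) \<le> B x" unfolding B_def using False by (auto intro: ennreal_leI)
    then show ?thesis by (simp add: add_increasing)
  qed
  have mA: "A \<in> borel_measurable lborel" unfolding A_def by measurable
  have mB: "B \<in> borel_measurable lborel" unfolding B_def by measurable
  have "(\<integral>\<^sup>+x. ennreal (\<bar>f x\<bar> powr r) \<partial>lborel) \<le> (\<integral>\<^sup>+x. A x + B x \<partial>lborel)"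
    by (intro nn_integral_mono pt)
  also have "\<dots> = (\<integral>\<^sup>+x. A x \<partial>lborel) + (\<integral>\<^sup>+x. B x \<partial>lborel)"
    using mA mB by (simp add: nn_integral_add)
  also have "(\<integral>\<^sup>+x. A x \<partial>lborel) = ennreal (M powr r) * emeasure lborel (ball (0::real^'n) R)"
    unfolding A_def by (simp add: nn_integral_cmult_indicator mult.commute)
  also have "(\<integral>\<^sup>+x. B x \<partial>lborel) \<le> ennreal (C powr r * (K3 * R powr (N - \<theta> * r)))"
    unfolding B_def by (rule hK3) (use C in auto)
  finally have "(\<integral>\<^sup>+x. ennreal (\<bar>f x\<bar> powr r) \<partial>lborel) \<le>
      ennreal (M powr r) * emeasure lborel (ball (0::real^'n) R) + ennreal (C powr r * (K3 * R powr (N - \<theta> * r)))"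
    by (simp add: add_left_mono)
  also have "\<dots> < \<infinity>" using C by (simp add: emeasure_ball_vec ennreal_mult_less_top)
  finally show ?thesis unfolding in_Lp_def using fm by simp
qed

lemma sol_swap: "pos_bdd_solution \<alpha> p q u v \<Longrightarrow> pos_bdd_solution \<alpha> q p v u"
  unfolding pos_bdd_solution_def by auto

lemma alg1:
  fixes \<alpha> p q :: real assumes "p * q > 1"
  shows "p * (\<alpha> * (q + 1) / (p * q - 1)) - \<alpha> = \<alpha> * (p + 1) / (p * q - 1)"
proof -
  have d: "p * q - 1 \<noteq> 0" using assms by simp
  show ?thesis using d by (simp add: field_simps)
qed

lemma part1_u:
  fixes u v :: "real^'n \<Rightarrow> real" and \<alpha> p q :: real
  assumes \<alpha>: "0 < \<alpha>" "\<alpha> < real CARD('n)"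
    and pq: "p > 0" "q > 0" "p * q > 1"
    and sol: "pos_bdd_solution \<alpha> p q u v"
    and lb: "LB u \<theta>" and th: "\<theta> < \<alpha> * (q + 1) / (p * q - 1)"
  shows False
proof -
  define A where "A = \<alpha> * (q + 1) / (p * q - 1)"
  note S = sol[unfolded pos_bdd_solution_def]
  have upos: "\<forall>x. u x > 0" and vpos: "\<forall>x. v x > 0" and ub: "bounded (range u)"
    and equ: "\<forall>x. riesz_pot \<alpha> (\<lambda>y. v y powr q) x = ennreal (u x)"
    and eqv: "\<forall>x. riesz_pot \<alpha> (\<lambda>y. u y powr p) x = ennreal (v x)"
    using S by auto
  have d: "p * q - 1 > 0" using pq by simp
  have step: "LB u (A + p * q * (\<phi> - A))" if "LB u \<phi>" for \<phi>
  proof -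
    have "LB v (p * \<phi> - \<alpha>)" by (rule annulus[OF upos vpos pq(1) \<alpha> eqv that])
    then have "LB u (q * (p * \<phi> - \<alpha>) - \<alpha>)" by (rule annulus[OF vpos upos pq(2) \<alpha> equ])
    moreover have "q * (p * \<phi> - \<alpha>) - \<alpha> = A + p * q * (\<phi> - A)"
    proof -
      have dA: "(p * q - 1) * A = \<alpha> * (q + 1)" unfolding A_def using d by simp
      have "q * (p * \<phi> - \<alpha>) - \<alpha> - (A + p * q * (\<phi> - A)) = (p * q - 1) * A - \<alpha> * (q + 1)"
        by (simp add: algebra_simps)
      then show ?thesis using dA by simp
    qed
    ultimately show ?thesis by simp
  qed
  have it: "LB u (A + (p * q)^k * (\<theta> - A))" for k
  proof (induction k)
    case 0 then show ?case using lb by simp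
  next
    case (Suc k)
    from step[OF Suc] show ?case by (simp add: algebra_simps)
  qed
  have Apos: "A > 0" unfolding A_def using \<alpha> pq d by simp
  have gap: "A - \<theta> > 0" using th unfolding A_def by simp
  obtain k where k: "A / (A - \<theta>) < (p * q)^k" using real_arch_pow[of "p * q" "A / (A - \<theta>)"] pq by auto
  then have "A < (p * q)^k * (A - \<theta>)" using gap by (simp add: field_simps)
  then have "A + (p * q)^k * (\<theta> - A) < 0" by (simp add: algebra_simps)
  then show False using LB_unbounded[OF it[of k] _ ub] by simp
qed

lemma frac_cancel: fixes a b N :: real shows "a \<noteq> 0 \<Longrightarrow> b \<noteq> 0 \<Longrightarrow> (a / b) * (N * b / a) = N"
  by simp

lemma avg_lt: fixes x y :: real shows "x < y \<Longrightarrow> (x + y) / 2 < y" "x < y \<Longrightarrow> x < (x + y) / 2"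
  by auto

lemma part2_u:
  fixes u v :: "real^'n \<Rightarrow> real" and \<alpha> p q :: real
  assumes \<alpha>: "0 < \<alpha>" "\<alpha> < real CARD('n)"
    and pq: "p > 0" "q > 0" "p * q > 1"
    and sol: "pos_bdd_solution \<alpha> p q u v"
    and hyp: "\<not> (in_Lp (real CARD('n) * (p * q - 1) / (\<alpha> * (q + 1))) u \<and>
          in_Lp (real CARD('n) * (p * q - 1) / (\<alpha> * (p + 1))) v)"
    and ubu: "UB u \<theta>" and th: "\<theta> > \<alpha> * (q + 1) / (p * q - 1)"
  shows False
proof -
  define N where "N = real CARD('n)"
  define A where "A = \<alpha> * (q + 1) / (p * q - 1)"
  define B where "B = \<alpha> * (p + 1) / (p * q - 1)"
  note S = sol[unfolded pos_bdd_solution_def]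
  have upos: "\<forall>x. u x > 0" and vpos: "\<forall>x. v x > 0" and ub: "bounded (range u)" and vb: "bounded (range v)"
    and um: "u \<in> borel_measurable lborel" and vm: "v \<in> borel_measurable lborel"
    and equ: "\<forall>x. riesz_pot \<alpha> (\<lambda>y. v y powr q) x = ennreal (u x)"
    and eqv: "\<forall>x. riesz_pot \<alpha> (\<lambda>y. u y powr p) x = ennreal (v x)"
    using S by auto
  have d: "p * q - 1 > 0" using pq by simp
  have Apos: "A > 0" and Bpos: "B > 0" unfolding A_def B_def using \<alpha> pq d by auto
  have pA: "p * A - \<alpha> = B" unfolding A_def B_def by (rule alg1[OF pq(3)])
  have qB: "q * B - \<alpha> = A" unfolding A_def B_def using alg1[of "q" "p" \<alpha>] pq(3) by (simp add: mult.commute)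
  have lbv: "LB v (N - \<alpha>)" unfolding N_def by (rule ball_lower[OF upos vpos pq(1) um ub \<alpha> eqv])
  have lbu: "LB u (q * (N - \<alpha>) - \<alpha>)" by (rule annulus[OF vpos upos pq(2) \<alpha> equ lbv])
  show False
  proof (cases "B \<ge> N - \<alpha>")
    case True
    have "q * (N - \<alpha>) \<le> q * B" using True pq by (intro mult_left_mono) auto
    then have "q * (N - \<alpha>) - \<alpha> < \<theta>" using qB th unfolding A_def by linarith
    then show False using LB_UB_False[OF lbu ubu] by simp
  next
    case False
    then have pAN: "p * A < N" using pA by linarith
    define \<theta>' where "\<theta>' = min \<theta> ((A + N / p) / 2)"
    have "A < N / p" using pAN pq by (simp add: field_simps)
    moreover have thA: "A < \<theta>" using th unfolding A_def .
    ultimately have t1: "A < \<theta>'" unfolding \<theta>'_def by simp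
    have t2: "\<theta>' \<le> \<theta>" unfolding \<theta>'_def by simp
    have "(A + N / p) / 2 < N / p" using avg_lt(1)[OF \<open>A < N / p\<close>] .
    then have "\<theta>' < N / p" unfolding \<theta>'_def by (simp add: min_less_iff_disj)
    then have t3: "p * \<theta>' < N" using pq by (simp add: field_simps)
    have t4: "p * A < p * \<theta>'" using t1 pq by simp
    have t5: "\<alpha> < p * \<theta>'" using t4 pA Bpos by linarith
    have ubu': "UB u \<theta>'" by (rule UB_mono[OF ubu t2])
    have r0: "A * (N * (p * q - 1) / (\<alpha> * (q + 1))) = N" unfolding A_def
      by (rule frac_cancel) (use \<alpha> pq d in auto)
    have s0: "B * (N * (p * q - 1) / (\<alpha> * (p + 1))) = N" unfolding B_def
      by (rule frac_cancel) (use \<alpha> pq d in auto)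
    have r0pos: "N * (p * q - 1) / (\<alpha> * (q + 1)) > 0" unfolding N_def using \<alpha> pq d by simp
    have s0pos: "N * (p * q - 1) / (\<alpha> * (p + 1)) > 0" unfolding N_def using \<alpha> pq d by simp
    have Lu: "in_Lp (N * (p * q - 1) / (\<alpha> * (q + 1))) u"
    proof (rule UB_in_Lp[OF um upos ub ubu' r0pos])
      have "A * (N * (p * q - 1) / (\<alpha> * (q + 1))) < \<theta>' * (N * (p * q - 1) / (\<alpha> * (q + 1)))"
        using t1 r0pos by (intro mult_strict_right_mono) auto
      then show "\<theta>' * (N * (p * q - 1) / (\<alpha> * (q + 1))) > real CARD('n)" using r0 unfolding N_def by simp
    qed
    have ubv: "UB v (p * \<theta>' - \<alpha>)"
      by (rule conv_upper[OF upos vpos pq(1) ub \<alpha> eqv ubu' t5 t3[unfolded N_def]])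
    have Lv: "in_Lp (N * (p * q - 1) / (\<alpha> * (p + 1))) v"
    proof (rule UB_in_Lp[OF vm vpos vb ubv s0pos])
      have "B * (N * (p * q - 1) / (\<alpha> * (p + 1))) < (p * \<theta>' - \<alpha>) * (N * (p * q - 1) / (\<alpha> * (p + 1)))"
        using t4 pA s0pos by (intro mult_strict_right_mono) auto
      then show "(p * \<theta>' - \<alpha>) * (N * (p * q - 1) / (\<alpha> * (p + 1))) > real CARD('n)" using s0 unfolding N_def by simp
    qed
    show False using hyp Lu Lv unfolding N_def by simp
  qed
qed

theorem theorem1p3:
  fixes u v :: "real^'n \<Rightarrow> real" and \<alpha> p q :: real
  assumes n3: "CARD('n) \<ge> 3"
    and \<alpha>: "0 < \<alpha>" "\<alpha> < real CARD('n)"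
    and pq: "p > 0" "q > 0" "p * q > 1"
    and sol: "pos_bdd_solution \<alpha> p q u v"
  shows
    "(\<forall>\<theta>1 \<theta>2. \<theta>1 < \<alpha> * (q + 1) / (p * q - 1) \<and> \<theta>2 < \<alpha> * (p + 1) / (p * q - 1) \<longrightarrow>
        \<not> (\<exists>C>0. \<exists>R. \<forall>x. norm x \<ge> R \<longrightarrow> u x \<ge> C * (1 + norm x) powr (- \<theta>1)) \<and>
        \<not> (\<exists>C>0. \<exists>R. \<forall>x. norm x \<ge> R \<longrightarrow> v x \<ge> C * (1 + norm x) powr (- \<theta>2)))
     \<and>
     (\<not> (in_Lp (real CARD('n) * (p * q - 1) / (\<alpha> * (q + 1))) u \<and>
          in_Lp (real CARD('n) * (p * q - 1) / (\<alpha> * (p + 1))) v) \<longrightarrow>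
      (\<forall>\<theta>3 \<theta>4. \<theta>3 > \<alpha> * (q + 1) / (p * q - 1) \<and> \<theta>4 > \<alpha> * (p + 1) / (p * q - 1) \<longrightarrow>
        \<not> (\<exists>C>0. \<exists>R. \<forall>x. norm x \<ge> R \<longrightarrow> u x \<le> C * (1 + norm x) powr (- \<theta>3)) \<and>
        \<not> (\<exists>C>0. \<exists>R. \<forall>x. norm x \<ge> R \<longrightarrow> v x \<le> C * (1 + norm x) powr (- \<theta>4))))"
proof -
  have pq': "q * p > 1" using pq(3) by (simp add: mult.commute)
  have sol': "pos_bdd_solution \<alpha> q p v u" by (rule sol_swap[OF sol])
  have d: "p * q - 1 > 0" using pq by simp
  have Apos: "\<alpha> * (q + 1) / (p * q - 1) > 0" using \<alpha> pq d by simp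
  have Bpos: "\<alpha> * (p + 1) / (p * q - 1) > 0" using \<alpha> pq d by simp
  have P1: "\<forall>\<theta>1 \<theta>2. \<theta>1 < \<alpha> * (q + 1) / (p * q - 1) \<and> \<theta>2 < \<alpha> * (p + 1) / (p * q - 1) \<longrightarrow>
        \<not> (\<exists>C>0. \<exists>R. \<forall>x. norm x \<ge> R \<longrightarrow> u x \<ge> C * (1 + norm x) powr (- \<theta>1)) \<and>
        \<not> (\<exists>C>0. \<exists>R. \<forall>x. norm x \<ge> R \<longrightarrow> v x \<ge> C * (1 + norm x) powr (- \<theta>2))"
  proof (intro allI impI conjI notI)
    fix \<theta>1 \<theta>2
    assume h: "\<theta>1 < \<alpha> * (q + 1) / (p * q - 1) \<and> \<theta>2 < \<alpha> * (p + 1) / (p * q - 1)"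
    {
      assume "\<exists>C>0. \<exists>R. \<forall>x. norm x \<ge> R \<longrightarrow> u x \<ge> C * (1 + norm x) powr (- \<theta>1)"
      then have "LB u \<theta>1" by (rule LB_from_stmt)
      then show False using part1_u[OF \<alpha> pq sol] h by blast
    }
    {
      assume "\<exists>C>0. \<exists>R. \<forall>x. norm x \<ge> R \<longrightarrow> v x \<ge> C * (1 + norm x) powr (- \<theta>2)"
      then have "LB v \<theta>2" by (rule LB_from_stmt)
      moreover have "\<theta>2 < \<alpha> * (p + 1) / (q * p - 1)" using h by (simp add: mult.commute)
      ultimately show False using part1_u[OF \<alpha> pq(2) pq(1) pq' sol'] by blast
    }
  qed
  have P2: "\<not> (in_Lp (real CARD('n) * (p * q - 1) / (\<alpha> * (q + 1))) u \<and>
          in_Lp (real CARD('n) * (p * q - 1) / (\<alpha> * (p + 1))) v) \<longrightarrow>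
      (\<forall>\<theta>3 \<theta>4. \<theta>3 > \<alpha> * (q + 1) / (p * q - 1) \<and> \<theta>4 > \<alpha> * (p + 1) / (p * q - 1) \<longrightarrow>
        \<not> (\<exists>C>0. \<exists>R. \<forall>x. norm x \<ge> R \<longrightarrow> u x \<le> C * (1 + norm x) powr (- \<theta>3)) \<and>
        \<not> (\<exists>C>0. \<exists>R. \<forall>x. norm x \<ge> R \<longrightarrow> v x \<le> C * (1 + norm x) powr (- \<theta>4)))"
  proof (intro allI impI conjI notI)
    fix \<theta>3 \<theta>4
    assume hyp: "\<not> (in_Lp (real CARD('n) * (p * q - 1) / (\<alpha> * (q + 1))) u \<and>
          in_Lp (real CARD('n) * (p * q - 1) / (\<alpha> * (p + 1))) v)"
    assume h: "\<theta>3 > \<alpha> * (q + 1) / (p * q - 1) \<and> \<theta>4 > \<alpha> * (p + 1) / (p * q - 1)"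
    {
      assume "\<exists>C>0. \<exists>R. \<forall>x. norm x \<ge> R \<longrightarrow> u x \<le> C * (1 + norm x) powr (- \<theta>3)"
      moreover have "\<theta>3 \<ge> 0" using h Apos by linarith
      ultimately have "UB u \<theta>3" by (rule UB_from_stmt)
      then show False using part2_u[OF \<alpha> pq sol hyp] h by blast
    }
    {
      assume "\<exists>C>0. \<exists>R. \<forall>x. norm x \<ge> R \<longrightarrow> v x \<le> C * (1 + norm x) powr (- \<theta>4)"
      moreover have "\<theta>4 \<ge> 0" using h Bpos by linarith
      ultimately have "UB v \<theta>4" by (rule UB_from_stmt)
      moreover have "\<theta>4 > \<alpha> * (p + 1) / (q * p - 1)" using h by (simp add: mult.commute)
      moreover have "\<not> (in_Lp (real CARD('n) * (q * p - 1) / (\<alpha> * (p + 1))) v \<and>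
          in_Lp (real CARD('n) * (q * p - 1) / (\<alpha> * (q + 1))) u)" using hyp by (auto simp: mult.commute)
      ultimately show False using part2_u[OF \<alpha> pq(2) pq(1) pq' sol'] by blast
    }
  qed
  show ?thesis using P1 P2 by blast
qed
end
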